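(* Let $G$ be a discrete group acting by homeomorphisms $\alpha$ on a locally compact Hausdorff space $X$, and let $\sigma$ be the induced action on $A=C_0(X)$, $\sigma_g(f)=f\circ\alpha_g^{-1}$. The following are equivalent: (i) $\sigma$ is $G$-separating, i.e. for all $a,b\in A_+$, $c\in A$, $\varepsilon>0$ there exist $d_1,d_2\in A$ and $g_1,g_2\in G$ with $\|d_1^*ad_1-\sigma_{g_1}(a)\|<\varepsilon$, $\|d_2^*bd_2-\sigma_{g_2}(b)\|<\varepsilon$ and $\|d_1^*cd_2\|<\varepsilon$; (ii) for all open $U_1,U_2\subseteq X$ and compact $K_1,K_2\subseteq X$ with $K_1\subseteq U_1$, $K_2\subseteq U_2$, there exist $g_1,g_2\in G$ with $\alpha_{g_1}(K_1)\subseteq U_1$, $\alpha_{g_2}(K_2)\subseteq U_2$ and $\alpha_{g_1}(K_1)\cap\alpha_{g_2}(K_2)=\emptyset$. *)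

theory Defs
  imports "HOL-Analysis.Analysis" "HOL-Algebra.Group"
begin

definition C0 :: "'a topology \<Rightarrow> ('a \<Rightarrow> complex) set" where
  "C0 X = {f. continuous_map X euclidean f \<and>
              (\<forall>e>0. \<exists>K. compactin X K \<and> (\<forall>x\<in>topspace X - K. norm (f x) < e))}"

definition C0_pos :: "'a topology \<Rightarrow> ('a \<Rightarrow> complex) set" where
  "C0_pos X = {f \<in> C0 X. \<forall>x\<in>topspace X. Im (f x) = 0 \<and> Re (f x) \<ge> 0}"

definition sup_norm :: "'a topology \<Rightarrow> ('a \<Rightarrow> complex) \<Rightarrow> real" where
  "sup_norm X f = (if topspace X = {} then 0 else (SUP x\<in>topspace X. norm (f x)))"

definition homeo_action :: "('g, 'b) monoid_scheme \<Rightarrow> 'a topology \<Rightarrow> ('g \<Rightarrow> 'a \<Rightarrow> 'a) \<Rightarrow> bool" where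
  "homeo_action G X \<alpha> \<longleftrightarrow>
     (\<forall>g\<in>carrier G. homeomorphic_map X X (\<alpha> g)) \<and>
     (\<forall>x\<in>topspace X. \<alpha> \<one>\<^bsub>G\<^esub> x = x) \<and>
     (\<forall>g\<in>carrier G. \<forall>h\<in>carrier G. \<forall>x\<in>topspace X. \<alpha> (g \<otimes>\<^bsub>G\<^esub> h) x = \<alpha> g (\<alpha> h x))"

definition induced_action :: "('g, 'b) monoid_scheme \<Rightarrow> ('g \<Rightarrow> 'a \<Rightarrow> 'a) \<Rightarrow> 'g \<Rightarrow> ('a \<Rightarrow> complex) \<Rightarrow> ('a \<Rightarrow> complex)" where
  "induced_action G \<alpha> g f = (\<lambda>x. f (\<alpha> (inv\<^bsub>G\<^esub> g) x))"

text \<open>G-separating action sigma on A = C_0(X) (pointwise operations; d^* = complex conjugate).\<close>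
definition G_separating :: "('g, 'b) monoid_scheme \<Rightarrow> 'a topology \<Rightarrow> ('g \<Rightarrow> ('a \<Rightarrow> complex) \<Rightarrow> ('a \<Rightarrow> complex)) \<Rightarrow> bool" where
  "G_separating G X \<sigma> \<longleftrightarrow>
     (\<forall>a\<in>C0_pos X. \<forall>b\<in>C0_pos X. \<forall>c\<in>C0 X. \<forall>e>0.
        \<exists>d1\<in>C0 X. \<exists>d2\<in>C0 X. \<exists>g1\<in>carrier G. \<exists>g2\<in>carrier G.
          sup_norm X (\<lambda>x. cnj (d1 x) * a x * d1 x - \<sigma> g1 a x) < e \<and>
          sup_norm X (\<lambda>x. cnj (d2 x) * b x * d2 x - \<sigma> g2 b x) < e \<and>
          sup_norm X (\<lambda>x. cnj (d1 x) * c x * d2 x) < e)"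

end

theory Submission
  imports Defs
begin

lemma cm_Re: "continuous_map X euclidean f \<Longrightarrow> continuous_map X euclideanreal (\<lambda>x. Re (f x))"
  by (simp add: continuous_map_atin tendsto_Re)

lemma cm_of_real: "continuous_map X euclideanreal f \<Longrightarrow> continuous_map X euclidean (\<lambda>x. complex_of_real (f x))"
  by (simp add: continuous_map_atin tendsto_of_real)

lemma cm_cmult: "continuous_map X euclidean f \<Longrightarrow> continuous_map X euclidean g \<Longrightarrow>
   continuous_map X euclidean (\<lambda>x. (f x :: complex) * g x)"
  by (simp add: continuous_map_atin tendsto_mult)

definition bnd :: "'a topology \<Rightarrow> ('a \<Rightarrow> complex) \<Rightarrow> bool" where
  "bnd X h \<longleftrightarrow> (\<exists>B. \<forall>x\<in>topspace X. norm (h x) \<le> B)"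

lemma C0_bnd:
  assumes "f \<in> C0 X" shows "bnd X f"
proof -
  have f: "continuous_map X euclidean f \<and> (\<forall>e>0. \<exists>K. compactin X K \<and> (\<forall>x\<in>topspace X - K. norm (f x) < e))"
    using assms unfolding C0_def by simp
  then obtain K where K: "compactin X K" "\<forall>x\<in>topspace X - K. norm (f x) < 1"
  proof -
    have "\<exists>K. compactin X K \<and> (\<forall>x\<in>topspace X - K. norm (f x) < 1)"
      using f zero_less_one by blast
    then show ?thesis using that by blast
  qed
  have cf: "continuous_map X euclidean f" using f by blast
  have "compact (f ` K)" using image_compactin[OF K(1) cf] by simp
  then have "bounded (f ` K)" by (rule compact_imp_bounded)
  then obtain B where B: "\<And>y. y \<in> f ` K \<Longrightarrow> norm y \<le> B"
    unfolding bounded_iff by blast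
  show ?thesis unfolding bnd_def
  proof (intro exI ballI)
    fix x assume x: "x \<in> topspace X"
    show "norm (f x) \<le> max B 1"
    proof (cases "x \<in> K")
      case True then have "norm (f x) \<le> B" using B by blast
      then show ?thesis by linarith
    next
      case False then have "norm (f x) < 1" using K(2) x by blast
      then show ?thesis by linarith
    qed
  qed
qed

lemma bnd_mult: "bnd X f \<Longrightarrow> bnd X g \<Longrightarrow> bnd X (\<lambda>x. f x * g x)"
proof -
  assume "bnd X f" "bnd X g"
  then obtain B1 B2 where B: "\<forall>x\<in>topspace X. norm (f x) \<le> B1" "\<forall>x\<in>topspace X. norm (g x) \<le> B2"
    unfolding bnd_def by blast
  show ?thesis unfolding bnd_def
  proof (intro exI ballI)
    fix x assume x: "x \<in> topspace X"
    have "norm (f x * g x) = norm (f x) * norm (g x)" by (simp add: norm_mult)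
    also have "\<dots> \<le> B1 * B2"
    proof -
      have h1: "norm (f x) \<le> B1" using B x by blast
      have h2: "norm (g x) \<le> B2" using B x by blast
      have "0 \<le> B1" using h1 norm_ge_zero[of "f x"] by linarith
      then show ?thesis using h1 h2 by (simp add: mult_mono)
    qed
    finally show "norm (f x * g x) \<le> B1 * B2" .
  qed
qed

lemma bnd_diff: "bnd X f \<Longrightarrow> bnd X g \<Longrightarrow> bnd X (\<lambda>x. f x - g x)"
proof -
  assume "bnd X f" "bnd X g"
  then obtain B1 B2 where B: "\<forall>x\<in>topspace X. norm (f x) \<le> B1" "\<forall>x\<in>topspace X. norm (g x) \<le> B2"
    unfolding bnd_def by blast
  show ?thesis unfolding bnd_def
  proof (intro exI ballI)
    fix x assume x: "x \<in> topspace X"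
    have "norm (f x - g x) \<le> norm (f x) + norm (g x)" by (rule norm_triangle_ineq4)
    moreover have "norm (f x) \<le> B1" "norm (g x) \<le> B2" using B x by blast+
    ultimately show "norm (f x - g x) \<le> B1 + B2" by linarith
  qed
qed

lemma bnd_cnj: "bnd X f \<Longrightarrow> bnd X (\<lambda>x. cnj (f x))"
  unfolding bnd_def by simp

lemma sup_norm_ge:
  assumes "bnd X h" "x \<in> topspace X"
  shows "norm (h x) \<le> sup_norm X h"
proof -
  from assms(1) obtain B where B: "\<forall>x\<in>topspace X. norm (h x) \<le> B" unfolding bnd_def by blast
  have bdd: "bdd_above ((\<lambda>x. norm (h x)) ` topspace X)"
    by (rule bdd_aboveI2[of _ _ B]) (use B in blast)
  have ne: "topspace X \<noteq> {}" using assms(2) by blast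
  have "norm (h x) \<le> (SUP x\<in>topspace X. norm (h x))" by (rule cSUP_upper[OF assms(2) bdd])
  then show ?thesis unfolding sup_norm_def using ne by simp
qed

lemma sup_norm_le:
  assumes "\<And>x. x \<in> topspace X \<Longrightarrow> norm (h x) \<le> t" "0 \<le> t"
  shows "sup_norm X h \<le> t"
proof (cases "topspace X = {}")
  case True then show ?thesis using assms by (simp add: sup_norm_def)
next
  case False
  have "(SUP x\<in>topspace X. norm (h x)) \<le> t" by (rule cSUP_least) (use False assms(1) in auto)
  then show ?thesis unfolding sup_norm_def using False by simp
qed


lemma act_cont:
  assumes "homeo_action G X \<alpha>" "g \<in> carrier G"
  shows "continuous_map X X (\<alpha> g)"
proof -
  have "homeomorphic_map X X (\<alpha> g)" using assms unfolding homeo_action_def by blast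
  then show ?thesis by (rule homeomorphic_imp_continuous_map)
qed

lemma act_top:
  assumes "homeo_action G X \<alpha>" "g \<in> carrier G" "x \<in> topspace X"
  shows "\<alpha> g x \<in> topspace X"
  using continuous_map_image_subset_topspace[OF act_cont[OF assms(1,2)]] assms(3) by blast

lemma act_inv1:
  assumes "group G" "homeo_action G X \<alpha>" "g \<in> carrier G" "x \<in> topspace X"
  shows "\<alpha> g (\<alpha> (inv\<^bsub>G\<^esub> g) x) = x"
proof -
  have i: "inv\<^bsub>G\<^esub> g \<in> carrier G" using group.inv_closed[OF assms(1,3)] .
  have "\<alpha> g (\<alpha> (inv\<^bsub>G\<^esub> g) x) = \<alpha> (g \<otimes>\<^bsub>G\<^esub> inv\<^bsub>G\<^esub> g) x"
    using assms(2,3,4) i unfolding homeo_action_def by simp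
  also have "\<dots> = \<alpha> \<one>\<^bsub>G\<^esub> x" using group.r_inv[OF assms(1,3)] by simp
  also have "\<dots> = x" using assms(2,4) unfolding homeo_action_def by simp
  finally show ?thesis .
qed

lemma act_inv2:
  assumes "group G" "homeo_action G X \<alpha>" "g \<in> carrier G" "x \<in> topspace X"
  shows "\<alpha> (inv\<^bsub>G\<^esub> g) (\<alpha> g x) = x"
proof -
  have i: "inv\<^bsub>G\<^esub> g \<in> carrier G" using group.inv_closed[OF assms(1,3)] .
  have "\<alpha> (inv\<^bsub>G\<^esub> g) (\<alpha> g x) = \<alpha> (inv\<^bsub>G\<^esub> g \<otimes>\<^bsub>G\<^esub> g) x"
    using assms(2,3,4) i unfolding homeo_action_def by simp
  also have "\<dots> = \<alpha> \<one>\<^bsub>G\<^esub> x" using group.l_inv[OF assms(1,3)] by simp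
  also have "\<dots> = x" using assms(2,4) unfolding homeo_action_def by simp
  finally show ?thesis .
qed

lemma Kset_compact:
  assumes "a \<in> C0 X" "t > 0"
  shows "compactin X {x\<in>topspace X. t \<le> Re (a x)}"
proof -
  have f: "continuous_map X euclidean a \<and> (\<forall>e>0. \<exists>K. compactin X K \<and> (\<forall>x\<in>topspace X - K. norm (a x) < e))"
    using assms unfolding C0_def by simp
  have "\<exists>K. compactin X K \<and> (\<forall>x\<in>topspace X - K. norm (a x) < t)"
    using f assms(2) by blast
  then obtain K where K: "compactin X K" "\<forall>x\<in>topspace X - K. norm (a x) < t" by blast
  have sub: "{x\<in>topspace X. t \<le> Re (a x)} \<subseteq> K"
  proof
    fix x assume x: "x \<in> {x\<in>topspace X. t \<le> Re (a x)}"
    show "x \<in> K"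
    proof (rule ccontr)
      assume "x \<notin> K"
      then have "norm (a x) < t" using K(2) x by blast
      moreover have "Re (a x) \<le> norm (a x)" by (rule complex_Re_le_cmod)
      ultimately show False using x by simp
    qed
  qed
  have cR: "continuous_map X euclideanreal (\<lambda>x. Re (a x))" using f cm_Re by blast
  have "closedin X {x\<in>topspace X. Re (a x) \<in> {t..}}"
    by (rule closedin_continuous_map_preimage[OF cR]) (use closed_atLeast closed_closedin in blast)
  then have cl: "closedin X {x\<in>topspace X. t \<le> Re (a x)}" by simp
  show ?thesis by (rule closed_compactin[OF K(1) sub cl])
qed

lemma Uset_open:
  assumes "a \<in> C0 X"
  shows "openin X {x\<in>topspace X. s < Re (a x)}"
proof -
  have cR: "continuous_map X euclideanreal (\<lambda>x. Re (a x))" using assms cm_Re unfolding C0_def by blast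
  have "openin X {x\<in>topspace X. Re (a x) \<in> {s<..}}"
    by (rule openin_continuous_map_preimage[OF cR]) (use open_greaterThan open_openin in blast)
  then show ?thesis by simp
qed


lemma one_side:
  assumes G: "group G" and act: "homeo_action G X \<alpha>" and a: "a \<in> C0_pos X" and t: "t > 0"
    and g: "g \<in> carrier G"
    and sub: "\<alpha> g ` {x\<in>topspace X. t \<le> Re (a x)} \<subseteq> {x\<in>topspace X. t/2 < Re (a x)}"
  shows "\<exists>d\<in>C0 X. (\<forall>x\<in>topspace X. norm (cnj (d x) * a x * d x - induced_action G \<alpha> g a x) \<le> t) \<and>
           (\<forall>x\<in>topspace X. d x \<noteq> 0 \<longrightarrow> x \<in> \<alpha> g ` {x\<in>topspace X. t \<le> Re (a x)})"
proof -
  define K where "K = {x\<in>topspace X. t \<le> Re (a x)}"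
  define ai where "ai = inv\<^bsub>G\<^esub> g"
  have ai: "ai \<in> carrier G" unfolding ai_def using group.inv_closed[OF G g] .
  have aC0: "a \<in> C0 X" and apos: "\<And>x. x \<in> topspace X \<Longrightarrow> Im (a x) = 0 \<and> Re (a x) \<ge> 0"
    using a unfolding C0_pos_def by auto
  have ca: "continuous_map X euclidean a" using aC0 unfolding C0_def by blast
  define s where "s x = Re (a (\<alpha> ai x))" for x
  define r where "r x = Re (a x)" for x
  define q where "q x = max (s x - t) 0 / max (r x) (t/2)" for x
  define d where "d x = complex_of_real (sqrt (q x))" for x
  have areal: "a x = complex_of_real (r x)" if "x \<in> topspace X" for x
    using apos[OF that] unfolding r_def by (simp add: complex_eq_iff)
  have sreal: "a (\<alpha> ai x) = complex_of_real (s x)" "s x \<ge> 0" if "x \<in> topspace X" for x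
    using apos[OF act_top[OF act ai that]] unfolding s_def by (simp_all add: complex_eq_iff)
  have rpos: "r x \<ge> 0" if "x \<in> topspace X" for x using apos[OF that] unfolding r_def by simp
  have sig: "induced_action G \<alpha> g a x = a (\<alpha> ai x)" for x
    unfolding induced_action_def ai_def by simp
  have big: "x \<in> \<alpha> g ` K" if x: "x \<in> topspace X" and st: "s x > t" for x
  proof -
    have y: "\<alpha> ai x \<in> topspace X" using act_top[OF act ai x] .
    have "\<alpha> ai x \<in> K" unfolding K_def using y st unfolding s_def by simp
    moreover have "\<alpha> g (\<alpha> ai x) = x" unfolding ai_def using act_inv1[OF G act g x] .
    ultimately show ?thesis by (metis imageI)
  qed
  have rbig: "r x > t/2" if x: "x \<in> topspace X" and st: "s x > t" for x
    using big[OF x st] sub unfolding K_def r_def by blast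
  have qnn: "q x \<ge> 0" if "x \<in> topspace X" for x
    unfolding q_def using t by simp
  have dbig: "s x > t" if "d x \<noteq> 0" for x
  proof (rule ccontr)
    assume "\<not> s x > t"
    then have "q x = 0" unfolding q_def by simp
    then have "d x = 0" unfolding d_def by simp
    then show False using that by simp
  qed
  have est: "norm (cnj (d x) * a x * d x - induced_action G \<alpha> g a x) \<le> t" if x: "x \<in> topspace X" for x
  proof -
    have "cnj (d x) * a x * d x = complex_of_real (sqrt (q x) * r x * sqrt (q x))"
      unfolding d_def areal[OF x] by simp
    also have "\<dots> = complex_of_real (q x * r x)"
      using qnn[OF x] by (simp add: algebra_simps)
    finally have e1: "cnj (d x) * a x * d x - induced_action G \<alpha> g a x = complex_of_real (q x * r x - s x)"
      unfolding sig sreal(1)[OF x] by simp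
    show ?thesis
    proof (cases "s x > t")
      case True
      have "r x > t/2" using rbig[OF x True] .
      then have m1: "max (r x) (t/2) = r x" and rp: "r x > 0" using t by auto
      have m2: "max (s x - t) 0 = s x - t" using True by simp
      have "q x * r x = s x - t" unfolding q_def m1 m2 using rp by simp
      then show ?thesis unfolding e1 using t by simp
    next
      case False
      then have "q x = 0" unfolding q_def by simp
      then show ?thesis unfolding e1 using False sreal(2)[OF x] by simp
    qed
  qed
  have cs: "continuous_map X euclideanreal s"
  proof -
    have "continuous_map X euclidean (a \<circ> \<alpha> ai)" by (rule continuous_map_compose[OF act_cont[OF act ai] ca])
    then show ?thesis unfolding s_def using cm_Re[of X "a \<circ> \<alpha> ai"] by (simp add: o_def)
  qed
  have cr: "continuous_map X euclideanreal r" unfolding r_def using cm_Re[OF ca] .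
  have cq: "continuous_map X euclideanreal q" unfolding q_def
  proof (rule continuous_map_real_divide)
    show "continuous_map X euclideanreal (\<lambda>x. max (s x - t) 0)"
      by (intro continuous_map_real_max continuous_map_diff cs continuous_map_canonical_const)
    show "continuous_map X euclideanreal (\<lambda>x. max (r x) (t / 2))"
      by (intro continuous_map_real_max cr continuous_map_canonical_const)
    show "max (r x) (t / 2) \<noteq> 0" for x using t by simp
  qed
  have cd: "continuous_map X euclidean d" unfolding d_def
    by (intro cm_of_real continuous_map_sqrt cq)
  have Kc: "compactin X K" unfolding K_def using Kset_compact[OF aC0 t] .
  have gKc: "compactin X (\<alpha> g ` K)" using image_compactin[OF Kc act_cont[OF act g]] .
  have dC0: "d \<in> C0 X"
    unfolding C0_def
  proof (intro CollectI conjI cd allI impI)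
    fix e :: real assume e: "e > 0"
    show "\<exists>K. compactin X K \<and> (\<forall>x\<in>topspace X - K. norm (d x) < e)"
    proof (intro exI conjI ballI)
      show "compactin X (\<alpha> g ` K)" using gKc .
      fix x assume x: "x \<in> topspace X - \<alpha> g ` K"
      have "d x = 0" using big dbig x by blast
      then show "norm (d x) < e" using e by simp
    qed
  qed
  show ?thesis
  proof (intro bexI conjI ballI impI)
    show "d \<in> C0 X" using dC0 .
    show "norm (cnj (d x) * a x * d x - induced_action G \<alpha> g a x) \<le> t" if "x \<in> topspace X" for x
      using est[OF that] .
    show "x \<in> \<alpha> g ` {x \<in> topspace X. t \<le> Re (a x)}" if "x \<in> topspace X" "d x \<noteq> 0" for x
      using big[OF that(1) dbig[OF that(2)]] unfolding K_def .
  qed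
qed

lemma dir2:
  assumes G: "group G" and act: "homeo_action G X \<alpha>"
    and H: "\<forall>U1 U2 K1 K2. openin X U1 \<and> openin X U2 \<and> compactin X K1 \<and> compactin X K2 \<and>
        K1 \<subseteq> U1 \<and> K2 \<subseteq> U2 \<longrightarrow>
       (\<exists>g1\<in>carrier G. \<exists>g2\<in>carrier G. \<alpha> g1 ` K1 \<subseteq> U1 \<and> \<alpha> g2 ` K2 \<subseteq> U2 \<and>
          \<alpha> g1 ` K1 \<inter> \<alpha> g2 ` K2 = {})"
  shows "G_separating G X (induced_action G \<alpha>)"
  unfolding G_separating_def
proof (intro ballI allI impI)
  fix a b c and e :: real
  assume a: "a \<in> C0_pos X" and b: "b \<in> C0_pos X" and c: "c \<in> C0 X" and e: "e > 0"
  define t where "t = e/2"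
  have t: "t > 0" "t < e" using e unfolding t_def by auto
  have aC0: "a \<in> C0 X" and bC0: "b \<in> C0 X" using a b unfolding C0_pos_def by auto
  define K1 where "K1 = {x\<in>topspace X. t \<le> Re (a x)}"
  define U1 where "U1 = {x\<in>topspace X. t/2 < Re (a x)}"
  define K2 where "K2 = {x\<in>topspace X. t \<le> Re (b x)}"
  define U2 where "U2 = {x\<in>topspace X. t/2 < Re (b x)}"
  have "openin X U1" "openin X U2" unfolding U1_def U2_def using Uset_open aC0 bC0 by blast+
  moreover have "compactin X K1" "compactin X K2" unfolding K1_def K2_def using Kset_compact aC0 bC0 t by blast+
  moreover have "K1 \<subseteq> U1" "K2 \<subseteq> U2" unfolding K1_def U1_def K2_def U2_def using t by auto
  ultimately obtain g1 g2 where g: "g1 \<in> carrier G" "g2 \<in> carrier G" "\<alpha> g1 ` K1 \<subseteq> U1" "\<alpha> g2 ` K2 \<subseteq> U2"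
     "\<alpha> g1 ` K1 \<inter> \<alpha> g2 ` K2 = {}"
    using H by meson
  obtain d1 where d1: "d1 \<in> C0 X" "\<forall>x\<in>topspace X. norm (cnj (d1 x) * a x * d1 x - induced_action G \<alpha> g1 a x) \<le> t"
     "\<forall>x\<in>topspace X. d1 x \<noteq> 0 \<longrightarrow> x \<in> \<alpha> g1 ` K1"
    using one_side[OF G act a t(1) g(1)] g(3) unfolding K1_def U1_def by blast
  obtain d2 where d2: "d2 \<in> C0 X" "\<forall>x\<in>topspace X. norm (cnj (d2 x) * b x * d2 x - induced_action G \<alpha> g2 b x) \<le> t"
     "\<forall>x\<in>topspace X. d2 x \<noteq> 0 \<longrightarrow> x \<in> \<alpha> g2 ` K2"
    using one_side[OF G act b t(1) g(2)] g(4) unfolding K2_def U2_def by blast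
  have z: "cnj (d1 x) * c x * d2 x = 0" if x: "x \<in> topspace X" for x
  proof (cases "d1 x = 0 \<or> d2 x = 0")
    case True then show ?thesis by auto
  next
    case False
    then have "x \<in> \<alpha> g1 ` K1 \<inter> \<alpha> g2 ` K2" using d1(3) d2(3) x by blast
    then show ?thesis using g(5) by blast
  qed
  show "\<exists>d1\<in>C0 X. \<exists>d2\<in>C0 X. \<exists>g1\<in>carrier G. \<exists>g2\<in>carrier G.
          sup_norm X (\<lambda>x. cnj (d1 x) * a x * d1 x - induced_action G \<alpha> g1 a x) < e \<and>
          sup_norm X (\<lambda>x. cnj (d2 x) * b x * d2 x - induced_action G \<alpha> g2 b x) < e \<and>
          sup_norm X (\<lambda>x. cnj (d1 x) * c x * d2 x) < e"
  proof (intro bexI conjI)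
    show "sup_norm X (\<lambda>x. cnj (d1 x) * a x * d1 x - induced_action G \<alpha> g1 a x) < e"
      using sup_norm_le[of X _ t] d1(2) t by fastforce
    show "sup_norm X (\<lambda>x. cnj (d2 x) * b x * d2 x - induced_action G \<alpha> g2 b x) < e"
      using sup_norm_le[of X _ t] d2(2) t by fastforce
    have "sup_norm X (\<lambda>x. cnj (d1 x) * c x * d2 x) \<le> 0"
      by (rule sup_norm_le) (use z in auto)
    then show "sup_norm X (\<lambda>x. cnj (d1 x) * c x * d2 x) < e" using e by linarith
  qed (use d1(1) d2(1) g(1,2) in auto)
qed


lemma bump:
  assumes H: "Hausdorff_space X" and lc: "locally_compact_space X"
    and U: "openin X U" and K: "compactin X K" and KU: "K \<subseteq> U"
  obtains f L where "continuous_map X euclideanreal f" "\<And>x. x \<in> topspace X \<Longrightarrow> 0 \<le> f x \<and> f x \<le> 1"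
    "\<And>x. x \<in> K \<Longrightarrow> f x = 1" "\<And>x. x \<in> topspace X \<Longrightarrow> x \<notin> U \<Longrightarrow> f x = 0"
    "compactin X L" "\<And>x. x \<in> topspace X \<Longrightarrow> x \<notin> L \<Longrightarrow> f x = 0"
proof -
  have "\<forall>K. compactin X K \<longrightarrow> (\<exists>U L. openin X U \<and> compactin X L \<and> closedin X L \<and> K \<subseteq> U \<and> U \<subseteq> L)"
    using locally_compact_space_compact_closed_compact[of X] H lc by blast
  then obtain V L where VL: "openin X V" "compactin X L" "K \<subseteq> V" "V \<subseteq> L"
    using K by blast
  have cr: "completely_regular_space X"
    using locally_compact_regular_imp_completely_regular_space lc H by blast
  define T where "T = topspace X - (U \<inter> V)"
  have Tc: "closedin X T" unfolding T_def using U VL(1) by (intro closedin_diff closedin_topspace openin_Int)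
  have dj: "disjnt K T" unfolding T_def disjnt_def using KU VL(3) by blast
  obtain f where f: "continuous_map X (top_of_set {0..1::real}) f" "f ` T \<subseteq> {0}" "f ` K \<subseteq> {1}"
    using Urysohn_completely_regular_compact_closed[of 0 1 X K T] cr K Tc dj by auto
  have f1: "continuous_map X euclideanreal f" "f ` topspace X \<subseteq> {0..1}"
    using f(1) unfolding continuous_map_in_subtopology by auto
  show ?thesis
  proof (rule that[of f L])
    show "continuous_map X euclideanreal f" using f1(1) .
    show "0 \<le> f x \<and> f x \<le> 1" if "x \<in> topspace X" for x using f1(2) that by auto
    show "f x = 1" if "x \<in> K" for x using f(3) that by auto
    show "f x = 0" if "x \<in> topspace X" "x \<notin> U" for x using f(2) that unfolding T_def by auto
    show "compactin X L" using VL(2) .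
    show "f x = 0" if "x \<in> topspace X" "x \<notin> L" for x using f(2) that VL(4) unfolding T_def by auto
  qed
qed


lemma cnj_mul: "cnj z * complex_of_real r * z = complex_of_real (cmod z ^ 2 * r)"
proof -
  have "cnj z * complex_of_real r * z = complex_of_real r * (z * cnj z)" by (simp add: algebra_simps)
  also have "\<dots> = complex_of_real r * complex_of_real (cmod z ^ 2)" using complex_norm_square[of z] by simp
  finally show ?thesis by (simp add: mult.commute)
qed

lemma key_ineq:
  fixes u v p q :: real
  assumes "u \<ge> 0" "v \<ge> 0" "p \<ge> 0" "q \<ge> 0" "u^2*p > 1/2" "v^2*q > 1/2"
  shows "u * sqrt(p*q) * v > 1/2"
proof -
  define N where "N = u * sqrt(p*q) * v"
  have N0: "N \<ge> 0" unfolding N_def using assms by simp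
  have "N^2 = (u^2*p) * (v^2*q)" unfolding N_def using assms(3,4)
    by (simp add: power_mult_distrib algebra_simps)
  also have "\<dots> > (1/2) * (1/2)"
    using assms(5,6) by (intro mult_strict_mono) auto
  finally have N2: "N^2 > 1/4" by simp
  show ?thesis
  proof (rule ccontr)
    assume "\<not> ?thesis"
    then have "N \<le> 1/2" unfolding N_def by simp
    then have "N^2 \<le> (1/2)^2" using N0 by (intro power_mono) auto
    then show False using N2 by (simp add: power2_eq_square)
  qed
qed


lemma bump_C0:
  assumes "continuous_map X euclideanreal f" "compactin X L" "\<And>x. x \<in> topspace X \<Longrightarrow> x \<notin> L \<Longrightarrow> f x = 0"
  shows "(\<lambda>x. complex_of_real (f x)) \<in> C0 X"
  unfolding C0_def
proof (intro CollectI conjI allI impI)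
  show "continuous_map X euclidean (\<lambda>x. complex_of_real (f x))" using cm_of_real[OF assms(1)] .
  fix e :: real assume e: "e > 0"
  show "\<exists>K. compactin X K \<and> (\<forall>x\<in>topspace X - K. norm (complex_of_real (f x)) < e)"
    using assms(2,3) e by (intro exI[of _ L]) auto
qed

lemma dir1:
  assumes G: "group G" and H: "Hausdorff_space X" and lc: "locally_compact_space X"
    and act: "homeo_action G X \<alpha>" and sep: "G_separating G X (induced_action G \<alpha>)"
    and U1: "openin X U1" and U2: "openin X U2" and K1: "compactin X K1" and K2: "compactin X K2"
    and KU1: "K1 \<subseteq> U1" and KU2: "K2 \<subseteq> U2"
  shows "\<exists>g1\<in>carrier G. \<exists>g2\<in>carrier G. \<alpha> g1 ` K1 \<subseteq> U1 \<and> \<alpha> g2 ` K2 \<subseteq> U2 \<and>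
          \<alpha> g1 ` K1 \<inter> \<alpha> g2 ` K2 = {}"
proof -
  obtain f1 L1 where f1: "continuous_map X euclideanreal f1" "\<And>x. x \<in> topspace X \<Longrightarrow> 0 \<le> f1 x \<and> f1 x \<le> 1"
    "\<And>x. x \<in> K1 \<Longrightarrow> f1 x = 1" "\<And>x. x \<in> topspace X \<Longrightarrow> x \<notin> U1 \<Longrightarrow> f1 x = 0"
    "compactin X L1" "\<And>x. x \<in> topspace X \<Longrightarrow> x \<notin> L1 \<Longrightarrow> f1 x = 0"
    by (rule bump[OF H lc U1 K1 KU1]) blast
  obtain f2 L2 where f2: "continuous_map X euclideanreal f2" "\<And>x. x \<in> topspace X \<Longrightarrow> 0 \<le> f2 x \<and> f2 x \<le> 1"
    "\<And>x. x \<in> K2 \<Longrightarrow> f2 x = 1" "\<And>x. x \<in> topspace X \<Longrightarrow> x \<notin> U2 \<Longrightarrow> f2 x = 0"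
    "compactin X L2" "\<And>x. x \<in> topspace X \<Longrightarrow> x \<notin> L2 \<Longrightarrow> f2 x = 0"
    by (rule bump[OF H lc U2 K2 KU2]) blast
  define a where "a x = complex_of_real (f1 x)" for x
  define b where "b x = complex_of_real (f2 x)" for x
  define c where "c x = complex_of_real (sqrt (f1 x * f2 x))" for x
  have aC: "a \<in> C0 X" unfolding a_def using bump_C0[OF f1(1,5,6)] .
  have bC: "b \<in> C0 X" unfolding b_def using bump_C0[OF f2(1,5,6)] .
  have cC: "c \<in> C0 X" unfolding c_def
  proof (rule bump_C0[OF _ f1(5)])
    show "continuous_map X euclideanreal (\<lambda>x. sqrt (f1 x * f2 x))"
      by (intro continuous_map_sqrt continuous_map_real_mult f1(1) f2(1))
    show "sqrt (f1 x * f2 x) = 0" if "x \<in> topspace X" "x \<notin> L1" for x using f1(6)[OF that] by simp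
  qed
  have aP: "a \<in> C0_pos X" unfolding C0_pos_def using aC f1(2) unfolding a_def by auto
  have bP: "b \<in> C0_pos X" unfolding C0_pos_def using bC f2(2) unfolding b_def by auto
  obtain d1 d2 g1 g2 where dd: "d1 \<in> C0 X" "d2 \<in> C0 X" "g1 \<in> carrier G" "g2 \<in> carrier G"
    "sup_norm X (\<lambda>x. cnj (d1 x) * a x * d1 x - induced_action G \<alpha> g1 a x) < 1/2"
    "sup_norm X (\<lambda>x. cnj (d2 x) * b x * d2 x - induced_action G \<alpha> g2 b x) < 1/2"
    "sup_norm X (\<lambda>x. cnj (d1 x) * c x * d2 x) < 1/2"
  proof -
    have h: "(1/2::real) > 0" by simp
    show ?thesis using sep[unfolded G_separating_def, rule_format, OF aP bP cC h] that by blast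
  qed
  have bndsig: "bnd X (induced_action G \<alpha> g f)" if gg: "g \<in> carrier G" and ff: "f \<in> C0 X" for g f
  proof -
    obtain B where B: "\<forall>x\<in>topspace X. norm (f x) \<le> B" using C0_bnd[OF ff] unfolding bnd_def by blast
    have "inv\<^bsub>G\<^esub> g \<in> carrier G" using group.inv_closed[OF G gg] .
    then show ?thesis unfolding bnd_def induced_action_def using B act_top[OF act] by blast
  qed
  have bnd1: "bnd X (\<lambda>x. cnj (d1 x) * a x * d1 x - induced_action G \<alpha> g1 a x)"
    by (intro bnd_diff bnd_mult bnd_cnj C0_bnd dd aC bndsig)
  have bnd2: "bnd X (\<lambda>x. cnj (d2 x) * b x * d2 x - induced_action G \<alpha> g2 b x)"
    by (intro bnd_diff bnd_mult bnd_cnj C0_bnd dd bC bndsig)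
  have bnd3: "bnd X (\<lambda>x. cnj (d1 x) * c x * d2 x)"
    by (intro bnd_mult bnd_cnj C0_bnd dd cC)
  have P1: "cmod (d1 x) ^ 2 * f1 x > 1/2" and x1: "x \<in> topspace X" if xin: "x \<in> \<alpha> g1 ` K1" for x
  proof -
    obtain k where k: "k \<in> K1" "x = \<alpha> g1 k" using xin by blast
    have kt: "k \<in> topspace X" using k(1) K1 compactin_subset_topspace by blast
    show xt: "x \<in> topspace X" using act_top[OF act dd(3) kt] k(2) by simp
    have "induced_action G \<alpha> g1 a x = a k"
      unfolding induced_action_def k(2) using act_inv2[OF G act dd(3) kt] by simp
    also have "\<dots> = 1" unfolding a_def using f1(3)[OF k(1)] by simp
    finally have s1: "induced_action G \<alpha> g1 a x = 1" .
    have "norm (cnj (d1 x) * a x * d1 x - induced_action G \<alpha> g1 a x) < 1/2"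
      using sup_norm_ge[OF bnd1 xt] dd(5) by simp
    then have "norm (complex_of_real (cmod (d1 x) ^ 2 * f1 x) - 1) < 1/2"
      unfolding s1 a_def cnj_mul .
    moreover have "complex_of_real (cmod (d1 x) ^ 2 * f1 x) - 1 = complex_of_real (cmod (d1 x) ^ 2 * f1 x - 1)"
      by simp
    ultimately have "\<bar>cmod (d1 x) ^ 2 * f1 x - 1\<bar> < 1/2"
      by (simp only: norm_of_real)
    then show "cmod (d1 x) ^ 2 * f1 x > 1/2" by linarith
  qed
  have P2: "cmod (d2 x) ^ 2 * f2 x > 1/2" and x2: "x \<in> topspace X" if xin: "x \<in> \<alpha> g2 ` K2" for x
  proof -
    obtain k where k: "k \<in> K2" "x = \<alpha> g2 k" using xin by blast
    have kt: "k \<in> topspace X" using k(1) K2 compactin_subset_topspace by blast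
    show xt: "x \<in> topspace X" using act_top[OF act dd(4) kt] k(2) by simp
    have "induced_action G \<alpha> g2 b x = b k"
      unfolding induced_action_def k(2) using act_inv2[OF G act dd(4) kt] by simp
    also have "\<dots> = 1" unfolding b_def using f2(3)[OF k(1)] by simp
    finally have s1: "induced_action G \<alpha> g2 b x = 1" .
    have "norm (cnj (d2 x) * b x * d2 x - induced_action G \<alpha> g2 b x) < 1/2"
      using sup_norm_ge[OF bnd2 xt] dd(6) by simp
    then have "norm (complex_of_real (cmod (d2 x) ^ 2 * f2 x) - 1) < 1/2"
      unfolding s1 b_def cnj_mul .
    moreover have "complex_of_real (cmod (d2 x) ^ 2 * f2 x) - 1 = complex_of_real (cmod (d2 x) ^ 2 * f2 x - 1)"
      by simp
    ultimately have "\<bar>cmod (d2 x) ^ 2 * f2 x - 1\<bar> < 1/2"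
      by (simp only: norm_of_real)
    then show "cmod (d2 x) ^ 2 * f2 x > 1/2" by linarith
  qed
  show ?thesis
  proof (intro bexI conjI)
    show "\<alpha> g1 ` K1 \<subseteq> U1"
    proof
      fix x assume x: "x \<in> \<alpha> g1 ` K1"
      show "x \<in> U1"
      proof (rule ccontr)
        assume "x \<notin> U1"
        then have "f1 x = 0" using f1(4) x1[OF x] by blast
        then show False using P1[OF x] by simp
      qed
    qed
    show "\<alpha> g2 ` K2 \<subseteq> U2"
    proof
      fix x assume x: "x \<in> \<alpha> g2 ` K2"
      show "x \<in> U2"
      proof (rule ccontr)
        assume "x \<notin> U2"
        then have "f2 x = 0" using f2(4) x2[OF x] by blast
        then show False using P2[OF x] by simp
      qed
    qed
    show "\<alpha> g1 ` K1 \<inter> \<alpha> g2 ` K2 = {}"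
    proof (rule ccontr)
      assume "\<alpha> g1 ` K1 \<inter> \<alpha> g2 ` K2 \<noteq> {}"
      then obtain x where xa: "x \<in> \<alpha> g1 ` K1" and xb: "x \<in> \<alpha> g2 ` K2" by blast
      have xt: "x \<in> topspace X" using x1[OF xa] .
      have "norm (cnj (d1 x) * c x * d2 x) = cmod (d1 x) * sqrt (f1 x * f2 x) * cmod (d2 x)"
        unfolding c_def using f1(2)[OF xt] f2(2)[OF xt] by (simp add: norm_mult)
      also have "\<dots> > 1/2"
        using key_ineq[of "cmod (d1 x)" "cmod (d2 x)" "f1 x" "f2 x"] P1[OF xa] P2[OF xb] f1(2)[OF xt] f2(2)[OF xt]
        by simp
      finally have "norm (cnj (d1 x) * c x * d2 x) > 1/2" .
      moreover have "norm (cnj (d1 x) * c x * d2 x) < 1/2"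
        using sup_norm_ge[OF bnd3 xt] dd(7) by simp
      ultimately show False by simp
    qed
  qed (use dd in auto)
qed

theorem mainTheorem8:
  fixes G :: "('g, 'b) monoid_scheme" and X :: "'a topology" and \<alpha> :: "'g \<Rightarrow> 'a \<Rightarrow> 'a"
  assumes "group G"
    and "Hausdorff_space X"
    and "locally_compact_space X"
    and "homeo_action G X \<alpha>"
  shows "G_separating G X (induced_action G \<alpha>) \<longleftrightarrow>
    (\<forall>U1 U2 K1 K2. openin X U1 \<and> openin X U2 \<and> compactin X K1 \<and> compactin X K2 \<and>
        K1 \<subseteq> U1 \<and> K2 \<subseteq> U2 \<longrightarrow>
       (\<exists>g1\<in>carrier G. \<exists>g2\<in>carrier G. \<alpha> g1 ` K1 \<subseteq> U1 \<and> \<alpha> g2 ` K2 \<subseteq> U2 \<and>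
          \<alpha> g1 ` K1 \<inter> \<alpha> g2 ` K2 = {}))"
proof
  assume "G_separating G X (induced_action G \<alpha>)"
  then show "\<forall>U1 U2 K1 K2. openin X U1 \<and> openin X U2 \<and> compactin X K1 \<and> compactin X K2 \<and>
        K1 \<subseteq> U1 \<and> K2 \<subseteq> U2 \<longrightarrow>
       (\<exists>g1\<in>carrier G. \<exists>g2\<in>carrier G. \<alpha> g1 ` K1 \<subseteq> U1 \<and> \<alpha> g2 ` K2 \<subseteq> U2 \<and>
          \<alpha> g1 ` K1 \<inter> \<alpha> g2 ` K2 = {})"
    using dir1[OF assms] by blast
next
  assume "\<forall>U1 U2 K1 K2. openin X U1 \<and> openin X U2 \<and> compactin X K1 \<and> compactin X K2 \<and>
        K1 \<subseteq> U1 \<and> K2 \<subseteq> U2 \<longrightarrow>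
       (\<exists>g1\<in>carrier G. \<exists>g2\<in>carrier G. \<alpha> g1 ` K1 \<subseteq> U1 \<and> \<alpha> g2 ` K2 \<subseteq> U2 \<and>
          \<alpha> g1 ` K1 \<inter> \<alpha> g2 ` K2 = {})"
  then show "G_separating G X (induced_action G \<alpha>)" using dir2[OF assms(1,4)] by blast
qed

end
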